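(* Let $\mathcal{C}$ be a $\chi$SPN (characteristic sum-product network, as defined in the context) over the random variables $\mathbf{X}=\{X_j\}_{j=1}^d$, all of whose leaf nodes are univariate, and let $\boldsymbol{X}=(X_1,\dots,X_d)$ be a random vector whose characteristic function is the function $\varphi_{\mathcal{C}}$ computed at the root of $\mathcal{C}$. Suppose that for every leaf $\mathrm{L}$ of $\mathcal{C}$ one has $\int_{\mathbb{R}}|\varphi_{\mathrm{L}}(t)|\,\mathrm{d}t<\infty$. Then $\boldsymbol{X}$ has a continuous probability density function $f_{\boldsymbol{X}}$, given for $\boldsymbol{x}\in\mathbb{R}^d$ by $$f_{\boldsymbol{X}}(\boldsymbol{x})=\frac{1}{(2\pi)^d}\int_{\boldsymbol{t}\in\mathbb{R}^d}\exp\left(-\mathrm{i}\,\boldsymbol{t}^{\top}\boldsymbol{x}\right)\varphi_{\mathcal{C}}(\boldsymbol{t})\,\lambda_d(\mathrm{d}\boldsymbol{t}),$$ where $\lambda_d$ is the Lebesgue measure on $(\mathbb{R}^d,\mathcal{B}(\mathbb{R}^d))$.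
   Context: The characteristic function (CF) of a random vector $\boldsymbol{X}\in\mathbb{R}^d$ with distribution $\mu_{\boldsymbol{X}}$ is $\varphi_{\boldsymbol{X}}(\boldsymbol{t})=\mathbb{E}[\exp(\mathrm{i}\boldsymbol{t}^\top\boldsymbol{X})]=\int_{\mathbb{R}^d}\exp(\mathrm{i}\boldsymbol{t}^\top\boldsymbol{x})\,\mu_{\boldsymbol{X}}(\mathrm{d}\boldsymbol{x})$, $\boldsymbol{t}\in\mathbb{R}^d$. A $\chi$SPN (with its parameters fixed; in the paper these parameters are output by a neural network given an intervened causal graph) over random variables $X_1,\dots,X_d$ is a rooted directed acyclic graph whose nodes are sum nodes, product nodes and leaf nodes. Each leaf $\mathrm{L}$ has as scope a single variable $X_j$ and carries the characteristic function $\varphi_{\mathrm{L}}:\mathbb{R}\to\mathbb{C}$ of a univariate probability distribution (e.g. categorical, normal, or $\alpha$-stable). The scope $\mathrm{sc}(\mathrm{N})$ of an inner node $\mathrm{N}$ is the union of the scopes of its children $\mathrm{ch}(\mathrm{N})$. The network is complete (all children of each sum node have the same scope) and decomposable (the children of each product node have pairwise disjoint scopes). For a node $\mathrm{N}$ and $\boldsymbol{t}$ indexed by the variables in its scope, writing $\boldsymbol{t}_{\mathrm{sc}(\mathrm{N})}$ for the restriction of $\boldsymbol{t}$ to those coordinates, the node's CF is defined recursively: for a product node, $\varphi_{\mathrm{P}}(\boldsymbol{t})=\prod_{\mathrm{N}\in\mathrm{ch}(\mathrm{P})}\varphi_{\mathrm{N}}(\boldsymbol{t}_{\mathrm{sc}(\mathrm{N})})$;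 for a sum node with weights $w_{\mathrm{S},\mathrm{N}}\ge 0$, $\sum_{\mathrm{N}\in\mathrm{ch}(\mathrm{S})}w_{\mathrm{S},\mathrm{N}}=1$, $\varphi_{\mathrm{S}}(\boldsymbol{t})=\sum_{\mathrm{N}\in\mathrm{ch}(\mathrm{S})}w_{\mathrm{S},\mathrm{N}}\varphi_{\mathrm{N}}(\boldsymbol{t})$. The root's scope is $\{X_1,\dots,X_d\}$ and $\varphi_{\mathcal{C}}$ denotes the CF at the root. *)

theory Defs
  imports "HOL-Probability.Probability"
begin

text \<open>A characteristic sum-product network over the variables indexed by the
  finite type 'n (so d = CARD('n)). Shared sub-DAGs are represented by unfolding
  into a tree, which does not change the CF computed at the root.
  Leaf j M: univariate leaf with scope X_j carrying the distribution M on the reals;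
  its CF is char M. SumN: list of (weight, child).\<close>

datatype 'n chispn =
    Leaf 'n "real measure"
  | SumN "(real \<times> 'n chispn) list"
  | ProdN "'n chispn list"

fun sc :: "'n chispn \<Rightarrow> 'n set" where
  "sc (Leaf j M) = {j}"
| "sc (SumN cs) = (\<Union>p\<in>set cs. sc (snd p))"
| "sc (ProdN cs) = (\<Union>N\<in>set cs. sc N)"

text \<open>CF of a node; arguments t outside the scope are ignored, so this equals
  the paper's recursion using restrictions t_sc(N).\<close>
fun phi :: "'n chispn \<Rightarrow> real ^ 'n \<Rightarrow> complex" where
  "phi (Leaf j M) t = char M (t $ j)"
| "phi (SumN cs) t = (\<Sum>p\<leftarrow>cs. complex_of_real (fst p) * phi (snd p) t)"
| "phi (ProdN cs) t = (\<Prod>N\<leftarrow>cs. phi N t)"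

fun leaves :: "'n chispn \<Rightarrow> ('n \<times> real measure) set" where
  "leaves (Leaf j M) = {(j, M)}"
| "leaves (SumN cs) = (\<Union>p\<in>set cs. leaves (snd p))"
| "leaves (ProdN cs) = (\<Union>N\<in>set cs. leaves N)"

fun valid :: "'n chispn \<Rightarrow> bool" where
  "valid (Leaf j M) = real_distribution M"
| "valid (SumN cs) =
     ((\<forall>p\<in>set cs. 0 \<le> fst p \<and> valid (snd p)) \<and>
      (\<Sum>p\<leftarrow>cs. fst p) = 1 \<and>
      (\<forall>p\<in>set cs. \<forall>q\<in>set cs. sc (snd p) = sc (snd q)))"
| "valid (ProdN cs) =
     ((\<forall>N\<in>set cs. valid N) \<and>
      (\<forall>i<length cs. \<forall>k<length cs. i \<noteq> k \<longrightarrow> sc (cs ! i) \<inter> sc (cs ! k) = {}))"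

end

theory Submission
  imports Defs
begin

lemma gauss1d:
  fixes \<sigma> u :: real assumes s: "0 < \<sigma>"
  shows "integrable lborel (\<lambda>s. exp (- (\<i> * complex_of_real (s * u))) * complex_of_real (exp (- (\<sigma>\<^sup>2 * s\<^sup>2) / 2)))"
    and "(CLINT s|lborel. exp (- (\<i> * complex_of_real (s * u))) * complex_of_real (exp (- (\<sigma>\<^sup>2 * s\<^sup>2) / 2)))
         = complex_of_real (2 * pi * normal_density 0 \<sigma> u)"
proof -
  define f where "f x = std_normal_density x *\<^sub>R iexp (- u / \<sigma> * x)" for x
  have fm[measurable]: "f \<in> borel_measurable borel" unfolding f_def by measurable
  have fi: "integrable lborel f"
    by (rule Bochner_Integration.integrable_bound[OF integrable_normal_density[of 1 0]]) (auto simp: f_def norm_mult normal_density_nonneg)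
  have ch: "char std_normal_distribution (- u / \<sigma>) = integral\<^sup>L lborel f"
    unfolding char_def f_def by (subst integral_density) (auto simp: normal_density_nonneg)
  have e: "f (0 + \<sigma> * s) = (1 / sqrt (2*pi)) *\<^sub>R (exp (- (\<i> * complex_of_real (s * u))) * complex_of_real (exp (- (\<sigma>\<^sup>2 * s\<^sup>2) / 2)))" for s
    using s by (simp add: f_def normal_density_def power_mult_distrib mult_ac scaleR_conv_of_real)
  have fi2: "integrable lborel (\<lambda>s. f (0 + \<sigma> * s))"
    using lborel_integrable_real_affine[OF fi, of \<sigma> 0] s by simp
  show i: "integrable lborel (\<lambda>s. exp (- (\<i> * complex_of_real (s * u))) * complex_of_real (exp (- (\<sigma>\<^sup>2 * s\<^sup>2) / 2)))"
    using integrable_scaleR_right[OF fi2, of "sqrt (2*pi)"] unfolding e by simp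
  have "complex_of_real (exp (- ((- u / \<sigma>)\<^sup>2) / 2)) = integral\<^sup>L lborel f"
    using ch char_std_normal_distribution by simp
  also have "\<dots> = \<sigma> *\<^sub>R (\<integral>s. f (0 + \<sigma> * s) \<partial>lborel)"
    using lborel_integral_real_affine[of \<sigma> f 0] s by simp
  also have "\<dots> = (\<sigma> / sqrt (2*pi)) *\<^sub>R (CLINT s|lborel. exp (- (\<i> * complex_of_real (s * u))) * complex_of_real (exp (- (\<sigma>\<^sup>2 * s\<^sup>2) / 2)))"
    unfolding e by simp
  finally have *: "(CLINT s|lborel. exp (- (\<i> * complex_of_real (s * u))) * complex_of_real (exp (- (\<sigma>\<^sup>2 * s\<^sup>2) / 2)))
      = (sqrt (2*pi) / \<sigma>) *\<^sub>R complex_of_real (exp (- ((- u / \<sigma>)\<^sup>2) / 2))"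
    using s by (simp add: field_simps)
  have "sqrt (2*pi) / \<sigma> * exp (- ((- u / \<sigma>)\<^sup>2) / 2) = 2 * pi * normal_density 0 \<sigma> u"
    using s by (simp add: normal_density_def real_sqrt_mult power_divide field_simps)
  then show "(CLINT s|lborel. exp (- (\<i> * complex_of_real (s * u))) * complex_of_real (exp (- (\<sigma>\<^sup>2 * s\<^sup>2) / 2)))
         = complex_of_real (2 * pi * normal_density 0 \<sigma> u)"
    unfolding * scaleR_conv_of_real by (metis of_real_mult)
qed

lemma lborel_prod_integral:
  fixes f :: "'a::euclidean_space \<Rightarrow> real \<Rightarrow> 'b::{real_normed_field, banach, second_countable_topology}"
  assumes int: "\<And>b. b \<in> Basis \<Longrightarrow> integrable lborel (f b)"
  shows "integrable lborel (\<lambda>x::'a. \<Prod>b\<in>Basis. f b (x \<bullet> b))"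
    and "(\<integral>x. (\<Prod>b\<in>Basis. f b (x \<bullet> b)) \<partial>(lborel::'a measure)) = (\<Prod>b\<in>Basis. integral\<^sup>L lborel (f b))"
proof -
  interpret product_sigma_finite "\<lambda>_::'a. lborel :: real measure" by standard
  define T where "T = (\<lambda>g::'a \<Rightarrow> real. \<Sum>b\<in>Basis. g b *\<^sub>R b)"
  have T[measurable]: "T \<in> measurable (\<Pi>\<^sub>M b\<in>Basis. lborel) borel"
    unfolding T_def by measurable
  have Tb: "T g \<bullet> b = g b" if "b \<in> Basis" for g b
    using that by (simp add: T_def inner_sum_left inner_Basis if_distrib cong: if_cong)
  have meas[measurable]: "(\<lambda>x::'a. \<Prod>b\<in>Basis. f b (x \<bullet> b)) \<in> borel_measurable borel"
    using int by (intro borel_measurable_prod) (auto dest: borel_measurable_integrable)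
  have eq: "(\<lambda>g. \<Prod>b\<in>Basis. f b (T g \<bullet> b)) = (\<lambda>g. \<Prod>b\<in>Basis. f b (g b))"
    by (intro ext prod.cong refl) (simp add: Tb)
  have L: "lborel = distr (\<Pi>\<^sub>M b\<in>Basis. lborel) borel T"
    unfolding T_def by (rule lborel_eq)
  have pi: "integrable (\<Pi>\<^sub>M b\<in>Basis. lborel) (\<lambda>g. \<Prod>b\<in>Basis. f b (g b))"
    by (rule product_integrable_prod) (auto intro: int)
  show "integrable lborel (\<lambda>x::'a. \<Prod>b\<in>Basis. f b (x \<bullet> b))"
    by (subst L, subst integrable_distr_eq) (auto simp: eq pi)
  show "(\<integral>x. (\<Prod>b\<in>Basis. f b (x \<bullet> b)) \<partial>(lborel::'a measure)) = (\<Prod>b\<in>Basis. integral\<^sup>L lborel (f b))"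
    by (subst L, subst integral_distr) (auto simp: eq intro!: product_integral_prod int)
qed


definition gk :: "real \<Rightarrow> 'a::euclidean_space \<Rightarrow> real" where
  "gk \<sigma> y = (\<Prod>b\<in>Basis. normal_density 0 \<sigma> (y \<bullet> b))"

lemma gk_nonneg: "0 \<le> gk \<sigma> y"
  unfolding gk_def by (intro prod_nonneg) (auto simp: normal_density_nonneg)

lemma gk_measurable[measurable]: "gk \<sigma> \<in> borel_measurable borel"
  unfolding gk_def normal_density_def by measurable

lemma gk_bound: fixes y :: "'a::euclidean_space" shows "gk \<sigma> y \<le> (1 / sqrt (2 * pi * \<sigma>\<^sup>2)) ^ DIM('a)"
proof -
  have "gk \<sigma> y \<le> (\<Prod>b\<in>(Basis::'a set). 1 / sqrt (2 * pi * \<sigma>\<^sup>2))"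
    unfolding gk_def
  proof (intro prod_mono conjI)
    fix b :: 'a
    show "0 \<le> normal_density 0 \<sigma> (y \<bullet> b)" by (simp add: normal_density_nonneg)
    show "normal_density 0 \<sigma> (y \<bullet> b) \<le> 1 / sqrt (2 * pi * \<sigma>\<^sup>2)"
      unfolding normal_density_def by (intro mult_left_le) auto
  qed
  then show ?thesis by simp
qed

lemma gk_integral:
  assumes "0 < \<sigma>"
  shows "integrable lborel (gk \<sigma> :: 'a::euclidean_space \<Rightarrow> real)" "integral\<^sup>L lborel (gk \<sigma> :: 'a \<Rightarrow> real) = 1"
  using lborel_prod_integral[of "\<lambda>b. normal_density 0 \<sigma>"] assms
  unfolding gk_def[abs_def] by auto

lemma gk_scale:
  assumes "0 < \<sigma>"
  shows "gk \<sigma> (\<sigma> *\<^sub>R (z::'a::euclidean_space)) = gk 1 z / \<sigma> ^ DIM('a)"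
proof -
  have "normal_density 0 \<sigma> (\<sigma> * s) = normal_density 0 1 s / \<sigma>" for s
    using assms by (simp add: normal_density_def power_mult_distrib real_sqrt_mult)
  then show ?thesis unfolding gk_def by (simp add: prod_dividef)
qed

lemma gk_fourier:
  fixes y :: "'a::euclidean_space"
  assumes s: "0 < \<sigma>"
  shows "integrable lborel (\<lambda>t::'a. exp (- (\<i> * complex_of_real (t \<bullet> y))) * complex_of_real (exp (- (\<sigma>\<^sup>2 * (norm t)\<^sup>2) / 2)))"
    and "(CLINT t|lborel. exp (- (\<i> * complex_of_real (t \<bullet> y))) * complex_of_real (exp (- (\<sigma>\<^sup>2 * (norm t)\<^sup>2) / 2)))
         = complex_of_real ((2 * pi) ^ DIM('a) * gk \<sigma> y)"
proof -
  define f where "f b s = exp (- (\<i> * complex_of_real (s * (y \<bullet> b)))) * complex_of_real (exp (- (\<sigma>\<^sup>2 * s\<^sup>2) / 2))" for b :: 'a and s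
  have eq: "exp (- (\<i> * complex_of_real (t \<bullet> y))) * complex_of_real (exp (- (\<sigma>\<^sup>2 * (norm t)\<^sup>2) / 2))
      = (\<Prod>b\<in>Basis. f b (t \<bullet> b))" for t :: 'a
  proof -
    have ty: "t \<bullet> y = (\<Sum>b\<in>Basis. (t \<bullet> b) * (y \<bullet> b))" by (rule euclidean_inner)
    have nt: "(norm t)\<^sup>2 = (\<Sum>b\<in>Basis. (t \<bullet> b) * (t \<bullet> b))"
      by (subst euclidean_inner[symmetric]) (simp add: power2_norm_eq_inner)
    have 1: "exp (- (\<i> * complex_of_real (t \<bullet> y))) = (\<Prod>b\<in>Basis. exp (- (\<i> * complex_of_real ((t \<bullet> b) * (y \<bullet> b)))))"
      unfolding ty of_real_sum sum_distrib_left sum_negf[symmetric] by (rule exp_sum) simp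
    have 2: "exp (- (\<sigma>\<^sup>2 * (norm t)\<^sup>2) / 2) = (\<Prod>b\<in>Basis. exp (- (\<sigma>\<^sup>2 * (t \<bullet> b)\<^sup>2) / 2))"
      unfolding nt sum_distrib_left sum_negf[symmetric] sum_divide_distrib by (simp add: power2_eq_square exp_sum)
    show ?thesis
      unfolding 1 2 f_def of_real_prod prod.distrib[symmetric] by simp
  qed
  have fi: "integrable lborel (f b)" for b
    unfolding f_def by (rule gauss1d(1)[OF s])
  show "integrable lborel (\<lambda>t::'a. exp (- (\<i> * complex_of_real (t \<bullet> y))) * complex_of_real (exp (- (\<sigma>\<^sup>2 * (norm t)\<^sup>2) / 2)))"
    unfolding eq by (rule lborel_prod_integral(1)[OF fi])
  have "(CLINT t|lborel. exp (- (\<i> * complex_of_real (t \<bullet> y))) * complex_of_real (exp (- (\<sigma>\<^sup>2 * (norm t)\<^sup>2) / 2)))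
       = (\<Prod>b\<in>(Basis::'a set). integral\<^sup>L lborel (f b))"
    unfolding eq by (rule lborel_prod_integral(2)[OF fi])
  also have "\<dots> = (\<Prod>b\<in>(Basis::'a set). complex_of_real (2 * pi * normal_density 0 \<sigma> (y \<bullet> b)))"
    unfolding f_def using gauss1d(2)[OF s] by simp
  also have "\<dots> = complex_of_real ((2 * pi) ^ DIM('a) * gk \<sigma> y)"
    by (simp add: gk_def prod.distrib of_real_prod)
  finally show "(CLINT t|lborel. exp (- (\<i> * complex_of_real (t \<bullet> y))) * complex_of_real (exp (- (\<sigma>\<^sup>2 * (norm t)\<^sup>2) / 2)))
         = complex_of_real ((2 * pi) ^ DIM('a) * gk \<sigma> y)" .
qed


definition Gs :: "real \<Rightarrow> ('a::euclidean_space \<Rightarrow> complex) \<Rightarrow> 'a \<Rightarrow> complex" where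
  "Gs \<sigma> \<phi> x = (CLINT t|lborel. exp (- (\<i> * complex_of_real (t \<bullet> x))) * \<phi> t * complex_of_real (exp (- (\<sigma>\<^sup>2 * (norm t)\<^sup>2) / 2)))"

definition GG :: "('a::euclidean_space \<Rightarrow> complex) \<Rightarrow> 'a \<Rightarrow> complex" where
  "GG \<phi> x = (CLINT t|lborel. exp (- (\<i> * complex_of_real (t \<bullet> x))) * \<phi> t)"

definition gs :: "real \<Rightarrow> 'w measure \<Rightarrow> ('w \<Rightarrow> 'a::euclidean_space) \<Rightarrow> 'a \<Rightarrow> real" where
  "gs \<sigma> P X x = (\<integral>\<omega>. gk \<sigma> (x - X \<omega>) \<partial>P)"

lemma norm_exp_mi: "norm (exp (- (\<i> * complex_of_real r))) = 1"
  by (metis mult_minus_right norm_exp_i_times of_real_minus)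

context
  fixes P :: "'w measure" and X :: "'w \<Rightarrow> 'a::euclidean_space" and \<phi> :: "'a \<Rightarrow> complex"
  assumes P: "prob_space P" and Xm[measurable]: "X \<in> measurable P borel"
    and phi: "\<And>t. \<phi> t = (CLINT \<omega>|P. exp (\<i> * complex_of_real (t \<bullet> X \<omega>)))"
    and phii: "integrable lborel \<phi>"
begin

lemma stepA:
  assumes s: "0 < \<sigma>"
  shows "complex_of_real ((2 * pi) ^ DIM('a) * gs \<sigma> P X x) = Gs \<sigma> \<phi> x"
proof -
  interpret P: prob_space P by (rule P)
  interpret PL: pair_sigma_finite P "lborel :: 'a measure"
    by (simp add: pair_sigma_finite_def P.sigma_finite_measure_axioms lborel.sigma_finite_measure_axioms)
  define E where "E t = complex_of_real (exp (- (\<sigma>\<^sup>2 * (norm t)\<^sup>2) / 2))" for t :: 'a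
  define F where "F \<omega> t = exp (- (\<i> * complex_of_real (t \<bullet> (x - X \<omega>)))) * E t" for \<omega> t
  have Fm[measurable]: "(\<lambda>(\<omega>, t). F \<omega> t) \<in> borel_measurable (P \<Otimes>\<^sub>M lborel)"
    unfolding F_def E_def by measurable
  have nF: "norm (F \<omega> t) = exp (- (\<sigma>\<^sup>2 * (norm t)\<^sup>2) / 2)" for \<omega> t
    unfolding F_def E_def norm_mult norm_exp_mi by simp
  have Fi: "integrable (P \<Otimes>\<^sub>M lborel) (\<lambda>(\<omega>, t). F \<omega> t)"
  proof (rule PL.Fubini_integrable)
    show "integrable P (\<lambda>\<omega>. \<integral>t. norm (case (\<omega>, t) of (\<omega>, t) \<Rightarrow> F \<omega> t) \<partial>lborel)"
      by (simp add: nF)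
    show "AE \<omega> in P. integrable lborel (\<lambda>t. case (\<omega>, t) of (\<omega>, t) \<Rightarrow> F \<omega> t)"
      unfolding F_def E_def using gk_fourier(1)[OF s] by (intro AE_I2) simp
  qed simp
  have FX: "F \<omega> t = (exp (- (\<i> * complex_of_real (t \<bullet> x))) * E t) * exp (\<i> * complex_of_real (t \<bullet> X \<omega>))" for \<omega> t
  proof -
    have "- (\<i> * complex_of_real (t \<bullet> (x - X \<omega>))) = - (\<i> * complex_of_real (t \<bullet> x)) + \<i> * complex_of_real (t \<bullet> X \<omega>)"
      by (simp add: inner_diff_right algebra_simps)
    then show ?thesis unfolding F_def by (simp only: exp_add mult_ac)
  qed
  have "complex_of_real ((2 * pi) ^ DIM('a) * gs \<sigma> P X x) = (\<integral>\<omega>. complex_of_real ((2 * pi) ^ DIM('a) * gk \<sigma> (x - X \<omega>)) \<partial>P)"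
    unfolding gs_def by (simp add: integral_complex_of_real)
  also have "\<dots> = (\<integral>\<omega>. (\<integral>t. F \<omega> t \<partial>lborel) \<partial>P)"
    by (simp only: F_def E_def gk_fourier(2)[OF s])
  also have "\<dots> = (\<integral>t. (\<integral>\<omega>. F \<omega> t \<partial>P) \<partial>lborel)"
    using PL.Fubini_integral[OF Fi] by simp
  also have "\<dots> = Gs \<sigma> \<phi> x"
    unfolding Gs_def FX integral_mult_right_zero phi[symmetric] E_def by (simp add: mult_ac)
  finally show ?thesis .
qed

lemma phim[measurable]: "\<phi> \<in> borel_measurable borel"
  using borel_measurable_integrable[OF phii] by simp

lemma GG_int: "integrable lborel (\<lambda>t. exp (- (\<i> * complex_of_real (t \<bullet> x))) * \<phi> t)"
  by (rule Bochner_Integration.integrable_bound[OF integrable_norm[OF phii]])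
     (auto simp: norm_mult norm_exp_mi)

lemma stepB:
  assumes sl: "sq \<longlonglongrightarrow> 0"
  shows "(\<lambda>k. Gs (sq k) \<phi> x) \<longlonglongrightarrow> GG \<phi> x"
  unfolding Gs_def GG_def
proof (rule integral_dominated_convergence[where w="\<lambda>t. norm (\<phi> t)"])
  show "integrable lborel (\<lambda>t. norm (\<phi> t))" using phii by simp
  show "AE t in lborel. (\<lambda>k. exp (- (\<i> * complex_of_real (t \<bullet> x))) * \<phi> t *
      complex_of_real (exp (- ((sq k)\<^sup>2 * (norm t)\<^sup>2) / 2))) \<longlonglongrightarrow> exp (- (\<i> * complex_of_real (t \<bullet> x))) * \<phi> t"
  proof (intro AE_I2)
    fix t :: 'a
    have "(\<lambda>k. exp (- (\<i> * complex_of_real (t \<bullet> x))) * \<phi> t * complex_of_real (exp (- ((sq k)\<^sup>2 * (norm t)\<^sup>2) / 2)))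
       \<longlonglongrightarrow> exp (- (\<i> * complex_of_real (t \<bullet> x))) * \<phi> t * complex_of_real (exp (- (0\<^sup>2 * (norm t)\<^sup>2) / 2))"
      by (intro tendsto_intros sl) simp
    then show "(\<lambda>k. exp (- (\<i> * complex_of_real (t \<bullet> x))) * \<phi> t *
      complex_of_real (exp (- ((sq k)\<^sup>2 * (norm t)\<^sup>2) / 2))) \<longlonglongrightarrow> exp (- (\<i> * complex_of_real (t \<bullet> x))) * \<phi> t"
      by simp
  qed
  show "AE t in lborel. norm (exp (- (\<i> * complex_of_real (t \<bullet> x))) * \<phi> t *
      complex_of_real (exp (- ((sq k)\<^sup>2 * (norm t)\<^sup>2) / 2))) \<le> norm (\<phi> t)" for k
    by (intro AE_I2) (simp add: norm_mult norm_exp_mi mult_left_le)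
qed auto

lemma Gs_bound:
  "norm (Gs \<sigma> \<phi> x) \<le> (\<integral>t. norm (\<phi> t) \<partial>lborel)"
proof -
  have "norm (Gs \<sigma> \<phi> x) \<le> (\<integral>t. norm (exp (- (\<i> * complex_of_real (t \<bullet> x))) * \<phi> t * complex_of_real (exp (- (\<sigma>\<^sup>2 * (norm t)\<^sup>2) / 2))) \<partial>lborel)"
    unfolding Gs_def by (rule integral_norm_bound)
  also have "\<dots> \<le> (\<integral>t. norm (\<phi> t) \<partial>lborel)"
  proof (rule Bochner_Integration.integral_mono)
    show "integrable lborel (\<lambda>t. norm (\<phi> t))" using phii by simp
    show "integrable lborel (\<lambda>t. norm (exp (- (\<i> * complex_of_real (t \<bullet> x))) * \<phi> t * complex_of_real (exp (- (\<sigma>\<^sup>2 * (norm t)\<^sup>2) / 2))))"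
      by (rule Bochner_Integration.integrable_bound[OF integrable_norm[OF phii]])
         (auto simp: norm_mult norm_exp_mi mult_left_le)
  qed (simp add: norm_mult norm_exp_mi mult_left_le)
  finally show ?thesis .
qed

definition "sq k = 1 / real (Suc k)"

lemma sq_pos: "0 < sq k" unfolding sq_def by simp

lemma sq_lim: "sq \<longlonglongrightarrow> 0"
  unfolding sq_def using LIMSEQ_Suc[OF lim_1_over_n] by simp

lemma GG_real: "Im (GG \<phi> x) = 0" and GG_nonneg: "0 \<le> Re (GG \<phi> x)"
  and gs_lim: "(\<lambda>k. gs (sq k) P X x) \<longlonglongrightarrow> Re (GG \<phi> x) / (2 * pi) ^ DIM('a)"
proof -
  have L: "(\<lambda>k. Gs (sq k) \<phi> x) \<longlonglongrightarrow> GG \<phi> x" by (rule stepB[OF sq_lim])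
  have eq: "Gs (sq k) \<phi> x = complex_of_real ((2 * pi) ^ DIM('a) * gs (sq k) P X x)" for k
    by (rule stepA[OF sq_pos, symmetric])
  have I: "(\<lambda>k. Im (Gs (sq k) \<phi> x)) \<longlonglongrightarrow> Im (GG \<phi> x)" by (intro tendsto_Im L)
  have "(\<lambda>k. Im (Gs (sq k) \<phi> x)) = (\<lambda>k. 0)" unfolding eq Im_complex_of_real ..
  with I have "(\<lambda>k. 0::real) \<longlonglongrightarrow> Im (GG \<phi> x)" by simp
  from LIMSEQ_unique[OF tendsto_const this] show "Im (GG \<phi> x) = 0" by simp
  have R: "(\<lambda>k. Re (Gs (sq k) \<phi> x)) \<longlonglongrightarrow> Re (GG \<phi> x)" by (intro tendsto_Re L)
  have R2: "(\<lambda>k. Re (Gs (sq k) \<phi> x)) = (\<lambda>k. (2 * pi) ^ DIM('a) * gs (sq k) P X x)"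
    unfolding eq Re_complex_of_real ..
  have gnn: "0 \<le> gs \<sigma> P X x" for \<sigma>
    unfolding gs_def by (intro Bochner_Integration.integral_nonneg gk_nonneg)
  have "\<forall>n. 0 \<le> Re (Gs (sq n) \<phi> x)" unfolding eq using gnn by simp
  then show "0 \<le> Re (GG \<phi> x)"
    by (intro LIMSEQ_le_const[OF R]) auto
  have "(\<lambda>k. ((2 * pi) ^ DIM('a) * gs (sq k) P X x) / (2 * pi) ^ DIM('a)) \<longlonglongrightarrow> Re (GG \<phi> x) / (2 * pi) ^ DIM('a)"
    using R unfolding R2 by (intro tendsto_divide) auto
  then show "(\<lambda>k. gs (sq k) P X x) \<longlonglongrightarrow> Re (GG \<phi> x) / (2 * pi) ^ DIM('a)"
    by simp
qed

lemma GG_cont: "continuous_on UNIV (GG \<phi>)"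
proof (intro continuous_at_imp_continuous_on ballI continuous_at_sequentiallyI)
  fix a :: 'a and u assume u: "u \<longlonglongrightarrow> a"
  show "(\<lambda>n. GG \<phi> (u n)) \<longlonglongrightarrow> GG \<phi> a"
    unfolding GG_def
  proof (rule integral_dominated_convergence[where w="\<lambda>t. norm (\<phi> t)"])
    show "integrable lborel (\<lambda>t. norm (\<phi> t))" using phii by simp
    show "AE t in lborel. (\<lambda>n. exp (- (\<i> * complex_of_real (t \<bullet> u n))) * \<phi> t) \<longlonglongrightarrow> exp (- (\<i> * complex_of_real (t \<bullet> a))) * \<phi> t"
      by (intro AE_I2 tendsto_intros u)
    show "AE t in lborel. norm (exp (- (\<i> * complex_of_real (t \<bullet> u n))) * \<phi> t) \<le> norm (\<phi> t)" for n
      by (intro AE_I2) (simp add: norm_mult norm_exp_mi)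
  qed auto
qed


end


context
  fixes P :: "'w measure" and X :: "'w \<Rightarrow> 'a::euclidean_space" and \<phi> :: "'a \<Rightarrow> complex"
  assumes P: "prob_space P" and Xm[measurable]: "X \<in> measurable P borel"
    and phi: "\<And>t. \<phi> t = (CLINT \<omega>|P. exp (\<i> * complex_of_real (t \<bullet> X \<omega>)))"
    and phii: "integrable lborel \<phi>"
begin

lemmas stepA' = stepA[OF P Xm phi phii]
lemmas Gs_bound' = Gs_bound[OF P Xm phi phii]
lemmas gs_lim' = gs_lim[OF P Xm phi phii]
lemmas GG_cont' = GG_cont[OF P Xm phi phii]
lemmas phim' = phim[OF P Xm phi phii]
lemmas sq_pos' = sq_pos[OF P Xm phi phii]
lemmas sq_lim' = sq_lim[OF P Xm phi phii]

lemma gs_nonneg: "0 \<le> gs \<sigma> P X x"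
  unfolding gs_def by (intro Bochner_Integration.integral_nonneg gk_nonneg)

lemma gs_bound:
  assumes "0 < \<sigma>" shows "gs \<sigma> P X x \<le> (\<integral>t. norm (\<phi> t) \<partial>lborel) / (2 * pi) ^ DIM('a)"
proof -
  have "(2 * pi) ^ DIM('a) * gs \<sigma> P X x = norm (Gs \<sigma> \<phi> x)"
    unfolding stepA'[OF assms, symmetric] norm_of_real using gs_nonneg by simp
  also have "\<dots> \<le> (\<integral>t. norm (\<phi> t) \<partial>lborel)" by (rule Gs_bound')
  finally show ?thesis by (simp add: field_simps)
qed

lemma g_bound: "Re (GG \<phi> x) / (2 * pi) ^ DIM('a) \<le> (\<integral>t. norm (\<phi> t) \<partial>lborel) / (2 * pi) ^ DIM('a)"
proof -
  have "\<forall>n. gs (sq n) P X x \<le> (\<integral>t. norm (\<phi> t) \<partial>lborel) / (2 * pi) ^ DIM('a)"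
    using gs_bound[OF sq_pos'] by blast
  then show ?thesis by (intro LIMSEQ_le_const2[OF gs_lim']) blast
qed

lemma gs_meas[measurable]: "gs \<sigma> P X \<in> borel_measurable borel"
proof -
  interpret P: prob_space P by (rule P)
  show ?thesis unfolding gs_def[abs_def] by measurable
qed

lemma GG_meas[measurable]: "GG \<phi> \<in> borel_measurable borel"
  using borel_measurable_continuous_onI[OF GG_cont'] .

lemma g_meas[measurable]: "(\<lambda>x. Re (GG \<phi> x) / (2 * pi) ^ DIM('a)) \<in> borel_measurable borel"
  using borel_measurable_continuous_onI[OF GG_cont'] by measurable

lemma box_int: "integrable lborel (\<lambda>x::'a. (c::real) * indicator (cbox l u) x)"
proof -
  have "integrable lborel (indicator (cbox l u) :: 'a \<Rightarrow> real)"
    using emeasure_bounded_finite[of "cbox l u"] by (intro integrable_real_indicator) auto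
  then show ?thesis by (rule integrable_mult_right)
qed

lemma stepC1:
  fixes h :: "'a \<Rightarrow> real"
  assumes hm[measurable]: "h \<in> borel_measurable borel"
    and hb: "\<And>x. \<bar>h x\<bar> \<le> indicator (cbox l u) x" and s: "0 < \<sigma>"
  shows "(\<integral>x. h x * gs \<sigma> P X x \<partial>lborel) = (\<integral>\<omega>. (\<integral>x. h x * gk \<sigma> (x - X \<omega>) \<partial>lborel) \<partial>P)"
proof -
  interpret P: prob_space P by (rule P)
  interpret PL: pair_sigma_finite P "lborel :: 'a measure"
    by (simp add: pair_sigma_finite_def P.sigma_finite_measure_axioms lborel.sigma_finite_measure_axioms)
  define K where "K = (1 / sqrt (2 * pi * \<sigma>\<^sup>2)) ^ DIM('a)"
  have bnd: "norm (h x * gk \<sigma> (x - y)) \<le> K * indicator (cbox l u) x" for x y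
  proof -
    have "norm (h x * gk \<sigma> (x - y)) = \<bar>h x\<bar> * gk \<sigma> (x - y)" by (simp add: abs_mult abs_of_nonneg gk_nonneg)
    also have "\<dots> \<le> indicator (cbox l u) x * K"
      by (intro mult_mono hb) (auto simp: K_def gk_bound gk_nonneg)
    finally show ?thesis by (simp add: mult.commute)
  qed
  have int2: "integrable lborel (\<lambda>x. h x * gk \<sigma> (x - y))" for y
  proof (rule Bochner_Integration.integrable_bound[OF box_int[of K l u]])
    have "norm (h x * gk \<sigma> (x - y)) \<le> norm (K * indicator (cbox l u) x)" for x
      by (rule order_trans[OF bnd]) simp
    then show "AE x in lborel. norm (h x * gk \<sigma> (x - y)) \<le> norm (K * indicator (cbox l u) x)" by simp
  qed simp
  have Fi: "integrable (P \<Otimes>\<^sub>M lborel) (\<lambda>(\<omega>, x). h x * gk \<sigma> (x - X \<omega>))"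
  proof (rule PL.Fubini_integrable)
    show "integrable P (\<lambda>\<omega>. \<integral>x. norm (case (\<omega>, x) of (\<omega>, x) \<Rightarrow> h x * gk \<sigma> (x - X \<omega>)) \<partial>lborel)"
    proof (rule P.integrable_const_bound[where B="\<integral>x. K * indicator (cbox l u) x \<partial>lborel"])
      show "AE \<omega> in P. norm (\<integral>x. norm (case (\<omega>, x) of (\<omega>, x) \<Rightarrow> h x * gk \<sigma> (x - X \<omega>)) \<partial>lborel)
          \<le> (\<integral>x. K * indicator (cbox l u) x \<partial>lborel)"
      proof (intro AE_I2)
        fix \<omega>
        have "norm (\<integral>x. norm (h x * gk \<sigma> (x - X \<omega>)) \<partial>lborel) = (\<integral>x. norm (h x * gk \<sigma> (x - X \<omega>)) \<partial>lborel)"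
          by (simp add: Bochner_Integration.integral_nonneg)
        also have "\<dots> \<le> (\<integral>x. K * indicator (cbox l u) x \<partial>lborel)"
          by (intro Bochner_Integration.integral_mono box_int bnd integrable_norm int2)
        finally show "norm (\<integral>x. norm (case (\<omega>, x) of (\<omega>, x) \<Rightarrow> h x * gk \<sigma> (x - X \<omega>)) \<partial>lborel)
          \<le> (\<integral>x. K * indicator (cbox l u) x \<partial>lborel)" by simp
      qed
    qed measurable
    show "AE \<omega> in P. integrable lborel (\<lambda>x. case (\<omega>, x) of (\<omega>, x) \<Rightarrow> h x * gk \<sigma> (x - X \<omega>))"
      using int2 by simp
  qed measurable
  have "(\<integral>x. h x * gs \<sigma> P X x \<partial>lborel) = (\<integral>x. (\<integral>\<omega>. h x * gk \<sigma> (x - X \<omega>) \<partial>P) \<partial>lborel)"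
    unfolding gs_def by simp
  also have "\<dots> = (\<integral>\<omega>. (\<integral>x. h x * gk \<sigma> (x - X \<omega>) \<partial>lborel) \<partial>P)"
    using PL.Fubini_integral[OF Fi] by simp
  finally show ?thesis .
qed

lemma stepC2:
  fixes h :: "'a \<Rightarrow> real"
  assumes hm[measurable]: "h \<in> borel_measurable borel" and s: "0 < \<sigma>"
  shows "(\<integral>x. h x * gk \<sigma> (x - y) \<partial>lborel) = (\<integral>z. h (y + \<sigma> *\<^sub>R z) * gk 1 z \<partial>lborel)"
proof -
  have "(\<integral>x. h x * gk \<sigma> (x - y) \<partial>lborel) =
     (\<integral>x. h x * gk \<sigma> (x - y) \<partial>density (distr lborel borel (\<lambda>z. y + \<sigma> *\<^sub>R z)) (\<lambda>_. \<bar>\<sigma>\<bar> ^ DIM('a)))"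
    using lborel_affine[of \<sigma> y] s by simp
  also have "\<dots> = (\<integral>x. \<bar>\<sigma>\<bar> ^ DIM('a) *\<^sub>R (h x * gk \<sigma> (x - y)) \<partial>distr lborel borel (\<lambda>z. y + \<sigma> *\<^sub>R z))"
    by (subst integral_density) auto
  also have "\<dots> = (\<integral>z. \<bar>\<sigma>\<bar> ^ DIM('a) *\<^sub>R (h (y + \<sigma> *\<^sub>R z) * gk \<sigma> (\<sigma> *\<^sub>R z)) \<partial>lborel)"
    by (subst integral_distr) auto
  also have "\<dots> = (\<integral>z. h (y + \<sigma> *\<^sub>R z) * gk 1 z \<partial>lborel)"
    using s by (simp add: gk_scale)
  finally show ?thesis .
qed


lemma stepC:
  fixes h :: "'a \<Rightarrow> real"
  assumes hc: "continuous_on UNIV h" and hb: "\<And>x. \<bar>h x\<bar> \<le> indicator (cbox l u) x"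
  shows "(\<integral>\<omega>. h (X \<omega>) \<partial>P) = (\<integral>x. h x * (Re (GG \<phi> x) / (2 * pi) ^ DIM('a)) \<partial>lborel)"
proof -
  interpret P: prob_space P by (rule P)
  have hm[measurable]: "h \<in> borel_measurable borel" by (rule borel_measurable_continuous_onI[OF hc])
  have h1: "\<bar>h x\<bar> \<le> 1" for x using hb[of x] by (cases "x \<in> cbox l u") auto
  define I where "I \<sigma> y = (\<integral>z. h (y + \<sigma> *\<^sub>R z) * gk 1 z \<partial>lborel)" for \<sigma> y
  have Im[measurable]: "I \<sigma> \<in> borel_measurable borel" for \<sigma>
    unfolding I_def[abs_def] by measurable
  have gk1: "integrable lborel (gk 1 :: 'a \<Rightarrow> real)" "integral\<^sup>L lborel (gk 1 :: 'a \<Rightarrow> real) = 1"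
    using gk_integral[of 1] by auto
  have nb: "norm (h (y + \<sigma> *\<^sub>R z) * gk 1 z) \<le> gk 1 z" for y \<sigma> z
    using h1[of "y + \<sigma> *\<^sub>R z"] gk_nonneg[of 1 z] by (simp add: abs_mult mult_left_le_one_le)
  have Iint: "integrable lborel (\<lambda>z. h (y + \<sigma> *\<^sub>R z) * gk 1 z)" for y \<sigma>
  proof (rule Bochner_Integration.integrable_bound[OF gk1(1)])
    have "norm (h (y + \<sigma> *\<^sub>R z) * gk 1 z) \<le> norm (gk 1 z)" for z
      using nb[of y \<sigma> z] gk_nonneg[of 1 z] by simp
    then show "AE z in lborel. norm (h (y + \<sigma> *\<^sub>R z) * gk 1 z) \<le> norm (gk 1 z)" by simp
  qed simp
  have Ib: "norm (I \<sigma> y) \<le> 1" for \<sigma> y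
  proof -
    have "norm (I \<sigma> y) \<le> (\<integral>z. norm (h (y + \<sigma> *\<^sub>R z) * gk 1 z) \<partial>lborel)"
      unfolding I_def by (rule integral_norm_bound)
    also have "\<dots> \<le> (\<integral>z. gk 1 (z::'a) \<partial>lborel)"
      by (rule Bochner_Integration.integral_mono[OF Bochner_Integration.integrable_norm[OF Iint] gk1(1)]) (rule nb)
    finally show ?thesis using gk1 by simp
  qed
  have Ilim: "(\<lambda>k. I (sq k) y) \<longlonglongrightarrow> h y" for y
  proof -
    have "(\<lambda>k. I (sq k) y) \<longlonglongrightarrow> (\<integral>z. h y * gk 1 (z::'a) \<partial>lborel)"
      unfolding I_def
    proof (rule integral_dominated_convergence[where w="gk 1"])
      show "AE z in lborel. (\<lambda>k. h (y + sq k *\<^sub>R z) * gk 1 z) \<longlonglongrightarrow> h y * gk 1 z"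
      proof (intro AE_I2)
        fix z :: 'a
        have c: "isCont h (y + 0 *\<^sub>R z)" using hc by (simp add: continuous_on_eq_continuous_at)
        have "(\<lambda>k. y + sq k *\<^sub>R z) \<longlonglongrightarrow> y + 0 *\<^sub>R z" by (intro tendsto_intros sq_lim')
        from isCont_tendsto_compose[OF c this]
        have "(\<lambda>k. h (y + sq k *\<^sub>R z)) \<longlonglongrightarrow> h y" by simp
        then show "(\<lambda>k. h (y + sq k *\<^sub>R z) * gk 1 z) \<longlonglongrightarrow> h y * gk 1 z"
          by (intro tendsto_intros)
      qed
      show "AE z in lborel. norm (h (y + sq k *\<^sub>R z) * gk 1 z) \<le> gk 1 z" for k
        by (intro AE_I2 nb)
    qed (auto intro: gk1)
    then show ?thesis using gk1 by simp
  qed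
  have C4: "(\<lambda>k. \<integral>\<omega>. I (sq k) (X \<omega>) \<partial>P) \<longlonglongrightarrow> (\<integral>\<omega>. h (X \<omega>) \<partial>P)"
  proof (rule integral_dominated_convergence[where w="\<lambda>_. 1"])
    show "AE \<omega> in P. (\<lambda>k. I (sq k) (X \<omega>)) \<longlonglongrightarrow> h (X \<omega>)" by (intro AE_I2 Ilim)
    show "AE \<omega> in P. norm (I (sq k) (X \<omega>)) \<le> 1" for k by (intro AE_I2 Ib)
  qed auto
  define K where "K = (\<integral>t. norm (\<phi> t) \<partial>lborel) / (2 * pi) ^ DIM('a)"
  have C5: "(\<lambda>k. \<integral>x. h x * gs (sq k) P X x \<partial>lborel) \<longlonglongrightarrow> (\<integral>x. h x * (Re (GG \<phi> x) / (2 * pi) ^ DIM('a)) \<partial>lborel)"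
  proof (rule integral_dominated_convergence[where w="\<lambda>x. K * indicator (cbox l u) x"])
    show "integrable lborel (\<lambda>x. K * indicator (cbox l u) x)" by (rule box_int)
    show "AE x in lborel. (\<lambda>k. h x * gs (sq k) P X x) \<longlonglongrightarrow> h x * (Re (GG \<phi> x) / (2 * pi) ^ DIM('a))"
      by (intro AE_I2 tendsto_intros gs_lim')
    show "AE x in lborel. norm (h x * gs (sq k) P X x) \<le> K * indicator (cbox l u) x" for k
    proof (intro AE_I2)
      fix x
      have "norm (h x * gs (sq k) P X x) = \<bar>h x\<bar> * gs (sq k) P X x" by (simp add: abs_mult gs_nonneg)
      also have "\<dots> \<le> indicator (cbox l u) x * K"
        unfolding K_def by (intro mult_mono hb gs_bound sq_pos') (auto simp: gs_nonneg)
      finally show "norm (h x * gs (sq k) P X x) \<le> K * indicator (cbox l u) x" by (simp add: mult.commute)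
    qed
  qed measurable
  have eq: "(\<integral>x. h x * gs (sq k) P X x \<partial>lborel) = (\<integral>\<omega>. I (sq k) (X \<omega>) \<partial>P)" for k
    unfolding stepC1[OF hm hb sq_pos'] I_def stepC2[OF hm sq_pos'] ..
  show ?thesis
    using C5 C4 unfolding eq by (rule LIMSEQ_unique[rotated])
qed


lemma box_eq:
  fixes a b :: 'a
  defines "g \<equiv> (\<lambda>x. Re (GG \<phi> x) / (2 * pi) ^ DIM('a))"
  shows "emeasure (distr P lborel X) (box a b) = emeasure (density lborel (\<lambda>x. ennreal (g x))) (box a b)"
proof -
  interpret P: prob_space P by (rule P)
  define B where "B = box a b"
  define hk where "hk k x = min 1 (real k * infdist x (- B))" for k :: nat and x
  define K where "K = (\<integral>t. norm (\<phi> t) \<partial>lborel) / (2 * pi) ^ DIM('a)"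
  have gnn: "0 \<le> g x" for x unfolding g_def using GG_nonneg[OF P Xm phi phii] by simp
  have gb: "g x \<le> K" for x unfolding g_def K_def by (rule g_bound)
  have gm[measurable]: "g \<in> borel_measurable borel" unfolding g_def by measurable
  have Bc: "B \<subseteq> cbox a b" unfolding B_def by (rule box_subset_cbox)
  have hc: "continuous_on UNIV (hk k)" for k
    unfolding hk_def by (intro continuous_intros)
  have hm[measurable]: "hk k \<in> borel_measurable borel" for k
    by (rule borel_measurable_continuous_onI[OF hc])
  have hB: "0 \<le> hk k x \<and> hk k x \<le> indicator B x" for k x
  proof (cases "x \<in> B")
    case True then show ?thesis by (simp add: hk_def infdist_nonneg)
  next
    case False then show ?thesis by (simp add: hk_def)
  qed
  have hb: "\<bar>hk k x\<bar> \<le> indicator (cbox a b) x" for k x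
    using hB[of k x] Bc by (cases "x \<in> B"; cases "x \<in> cbox a b") auto
  have h1: "norm (hk k x) \<le> 1" for k x
    using hB[of k x] by (cases "x \<in> B") auto
  have nB: "- B \<noteq> {}"
  proof -
    obtain i :: 'a where i: "i \<in> Basis" using nonempty_Basis by blast
    have "a \<notin> B" using i unfolding B_def mem_box by force
    then show ?thesis by blast
  qed
  have hlim: "(\<lambda>k. hk k x) \<longlonglongrightarrow> indicator B x" for x
  proof (cases "x \<in> B")
    case True
    have d: "0 < infdist x (- B)"
      using True nB by (intro infdist_pos_not_in_closed) (auto simp: B_def)
    obtain N :: nat where N: "1 < real N * infdist x (- B)"
      using reals_Archimedean3[OF d] by blast
    have "eventually (\<lambda>k. hk k x = indicator B x) sequentially"
      unfolding eventually_sequentially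
    proof (intro exI allI impI)
      fix k assume "N \<le> k"
      then have "real N * infdist x (- B) \<le> real k * infdist x (- B)"
        using d by (intro mult_right_mono) auto
      then show "hk k x = indicator B x" using N True by (simp add: hk_def)
    qed
    then show ?thesis by (rule tendsto_eventually)
  next
    case False then show ?thesis by (simp add: hk_def)
  qed
  have eqk: "(\<integral>\<omega>. hk k (X \<omega>) \<partial>P) = (\<integral>x. hk k x * g x \<partial>lborel)" for k
    unfolding g_def by (rule stepC[OF hc hb])
  have L1: "(\<lambda>k. \<integral>\<omega>. hk k (X \<omega>) \<partial>P) \<longlonglongrightarrow> (\<integral>\<omega>. indicator B (X \<omega>) \<partial>P)"
  proof (rule integral_dominated_convergence[where w="\<lambda>_. 1"])
    show "AE \<omega> in P. (\<lambda>k. hk k (X \<omega>)) \<longlonglongrightarrow> indicator B (X \<omega>)" by (intro AE_I2 hlim)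
    show "AE \<omega> in P. norm (hk k (X \<omega>)) \<le> 1" for k
      using h1 by (intro AE_I2) auto
  qed (auto simp: B_def)
  have L2: "(\<lambda>k. \<integral>x. hk k x * g x \<partial>lborel) \<longlonglongrightarrow> (\<integral>x. indicator B x * g x \<partial>lborel)"
  proof (rule integral_dominated_convergence[where w="\<lambda>x. K * indicator (cbox a b) x"])
    show "integrable lborel (\<lambda>x. K * indicator (cbox a b) x)" by (rule box_int)
    show "AE x in lborel. (\<lambda>k. hk k x * g x) \<longlonglongrightarrow> indicator B x * g x"
      by (intro AE_I2 tendsto_intros hlim)
    show "AE x in lborel. norm (hk k x * g x) \<le> K * indicator (cbox a b) x" for k
    proof (intro AE_I2)
      fix x
      have "norm (hk k x * g x) = \<bar>hk k x\<bar> * g x" by (simp add: abs_mult gnn)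
      also have "\<dots> \<le> indicator (cbox a b) x * K" by (intro mult_mono hb gb) (auto simp: gnn)
      finally show "norm (hk k x * g x) \<le> K * indicator (cbox a b) x" by (simp add: mult.commute)
    qed
  qed (auto simp: B_def)
  have EQ: "(\<integral>\<omega>. indicator B (X \<omega>) \<partial>P) = (\<integral>x. indicator B x * g x \<partial>lborel)"
    using L1 L2 unfolding eqk by (rule LIMSEQ_unique)
  have int: "integrable lborel (\<lambda>x. indicator B x * g x)"
  proof (rule Bochner_Integration.integrable_bound[OF box_int[of K a b]])
    have "norm (indicator B x * g x) \<le> norm (K * indicator (cbox a b) x)" for x
      using Bc gnn[of x] gb[of x] by (auto simp: indicator_def)
    then show "AE x in lborel. norm (indicator B x * g x) \<le> norm (K * indicator (cbox a b) x)" by simp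
  qed (auto simp: B_def)
  have "emeasure (distr P lborel X) B = ennreal (measure (distr P lborel X) B)"
  proof -
    interpret D: prob_space "distr P lborel X" by (rule P.prob_space_distr) simp
    show ?thesis by (rule D.emeasure_eq_measure)
  qed
  also have "measure (distr P lborel X) B = (\<integral>\<omega>. indicator B (X \<omega>) \<partial>P)"
  proof -
    have "(\<integral>\<omega>. indicator B (X \<omega>) \<partial>P) = integral\<^sup>L (distr P lborel X) (indicator B :: 'a \<Rightarrow> real)"
      by (rule integral_distr[symmetric]) (auto simp: B_def)
    then show ?thesis by simp
  qed
  also have "\<dots> = (\<integral>x. indicator B x * g x \<partial>lborel)" by (rule EQ)
  also have "ennreal \<dots> = (\<integral>\<^sup>+x. ennreal (indicator B x * g x) \<partial>lborel)"
    by (rule nn_integral_eq_integral[OF int, symmetric]) (auto simp: gnn)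
  also have "\<dots> = emeasure (density lborel (\<lambda>x. ennreal (g x))) B"
    by (subst emeasure_density) (auto simp: B_def mult.commute indicator_def intro!: nn_integral_cong)
  finally show ?thesis by (simp add: B_def)
qed


lemma stepD:
  "distr P lborel X = density lborel (\<lambda>x. ennreal (Re (GG \<phi> x) / (2 * pi) ^ DIM('a)))"
proof (rule measure_eqI_generator_eq)
  interpret P: prob_space P by (rule P)
  interpret D: prob_space "distr P lborel X" by (rule P.prob_space_distr) simp
  let ?E = "range (\<lambda>(a, b). box a b::'a set)"
  show "Int_stable ?E"
    by (auto simp: Int_stable_def box_Int_box)
  show "?E \<subseteq> Pow UNIV" "sets (distr P lborel X) = sigma_sets UNIV ?E"
     "sets (density lborel (\<lambda>x. ennreal (Re (GG \<phi> x) / (2 * pi) ^ DIM('a)))) = sigma_sets UNIV ?E"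
    by (simp_all add: borel_eq_box)
  let ?A = "\<lambda>n::nat. box (- (real n *\<^sub>R One)) (real n *\<^sub>R One) :: 'a set"
  show "range ?A \<subseteq> ?E" "(\<Union>i. ?A i) = UNIV"
    unfolding UN_box_eq_UNIV by auto
  show "emeasure (distr P lborel X) (?A i) \<noteq> \<infinity>" for i by simp
  show "emeasure (distr P lborel X) Y = emeasure (density lborel (\<lambda>x. ennreal (Re (GG \<phi> x) / (2 * pi) ^ DIM('a)))) Y"
    if "Y \<in> ?E" for Y
    using that box_eq by auto
qed

theorem inversion_generic:
  shows "\<exists>f :: 'a \<Rightarrow> real.
           continuous_on UNIV f \<and> (\<forall>x. 0 \<le> f x) \<and>
           distributed P lborel X (\<lambda>x. ennreal (f x)) \<and>
           (\<forall>x. complex_of_real (f x) =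
                 (1 / (2 * pi) ^ DIM('a)) *
                 (CLINT t|lborel. exp (- (\<i> * complex_of_real (t \<bullet> x))) * \<phi> t))"
proof (intro exI conjI allI)
  let ?g = "\<lambda>x. Re (GG \<phi> x) / (2 * pi) ^ DIM('a)"
  show "continuous_on UNIV ?g"
    by (intro continuous_intros GG_cont') simp
  show "0 \<le> ?g x" for x using GG_nonneg[OF P Xm phi phii] by simp
  show "distributed P lborel X (\<lambda>x. ennreal (?g x))"
    unfolding distributed_def using stepD by simp
  fix x
  have "GG \<phi> x = complex_of_real (Re (GG \<phi> x))"
    using GG_real[OF P Xm phi phii] by (simp add: complex_eq_iff)
  then show "complex_of_real (?g x) = (1 / (2 * pi) ^ DIM('a)) *
                 (CLINT t|lborel. exp (- (\<i> * complex_of_real (t \<bullet> x))) * \<phi> t)"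
    unfolding GG_def[symmetric] by (simp add: field_simps)
qed


end


definition bnd :: "'n::finite set \<Rightarrow> (real ^ 'n \<Rightarrow> complex) \<Rightarrow> bool" where
  "bnd S f \<longleftrightarrow> f \<in> borel_measurable borel \<and> (\<exists>c b. 0 \<le> c \<and>
     (\<forall>j\<in>S. (\<forall>s. 0 \<le> b j s) \<and> b j \<in> borel_measurable borel \<and> integrable lborel (b j)) \<and>
     (\<forall>t. norm (f t) \<le> c * (\<Prod>j\<in>S. b j (t $ j))))"

lemma bnd_zero: "bnd S (\<lambda>t. 0)"
  unfolding bnd_def by (intro conjI exI[of _ 0] exI[of _ "\<lambda>_ _. 0"]) auto

lemma bnd_scale: assumes "bnd S f" shows "bnd S (\<lambda>t. complex_of_real a * f t)"
proof -
  from assms obtain c b where fm: "f \<in> borel_measurable borel" and c: "0 \<le> c"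
    and b: "\<forall>j\<in>S. (\<forall>s. 0 \<le> b j s) \<and> b j \<in> borel_measurable borel \<and> integrable lborel (b j)"
    and f1: "\<forall>t. norm (f t) \<le> c * (\<Prod>j\<in>S. b j (t $ j))"
    unfolding bnd_def by blast
  have "norm (complex_of_real a * f t) \<le> (\<bar>a\<bar> * c) * (\<Prod>j\<in>S. b j (t $ j))" for t
  proof -
    have "norm (complex_of_real a * f t) = \<bar>a\<bar> * norm (f t)" by (simp add: norm_mult)
    also have "\<dots> \<le> \<bar>a\<bar> * (c * (\<Prod>j\<in>S. b j (t $ j)))" using f1 by (intro mult_left_mono) auto
    finally show ?thesis by (simp add: mult_ac)
  qed
  moreover have "(\<lambda>t. complex_of_real a * f t) \<in> borel_measurable borel" using fm by measurable
  moreover have "0 \<le> \<bar>a\<bar> * c" using c by simp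
  ultimately show ?thesis unfolding bnd_def using b by blast
qed

lemma bnd_add: assumes "bnd S f" "bnd S g" shows "bnd S (\<lambda>t. f t + g t)"
proof -
  from assms obtain c1 b1 c2 b2 where fm: "f \<in> borel_measurable borel" and gm: "g \<in> borel_measurable borel"
    and c: "0 \<le> c1" "0 \<le> c2"
    and b1: "\<forall>j\<in>S. (\<forall>s. 0 \<le> b1 j s) \<and> b1 j \<in> borel_measurable borel \<and> integrable lborel (b1 j)"
    and b2: "\<forall>j\<in>S. (\<forall>s. 0 \<le> b2 j s) \<and> b2 j \<in> borel_measurable borel \<and> integrable lborel (b2 j)"
    and f1: "\<forall>t. norm (f t) \<le> c1 * (\<Prod>j\<in>S. b1 j (t $ j))"
    and g1: "\<forall>t. norm (g t) \<le> c2 * (\<Prod>j\<in>S. b2 j (t $ j))"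
    unfolding bnd_def by blast
  define b where "b j s = b1 j s + b2 j s" for j s
  have m: "(\<lambda>t. f t + g t) \<in> borel_measurable borel" using fm gm by measurable
  have bp: "\<forall>j\<in>S. (\<forall>s. 0 \<le> b j s) \<and> b j \<in> borel_measurable borel \<and> integrable lborel (b j)"
  proof
    fix j assume j: "j \<in> S"
    have "\<forall>s. 0 \<le> b j s" using b1 b2 j unfolding b_def by (simp add: add_nonneg_nonneg)
    moreover have "b j \<in> borel_measurable borel"
    proof -
      have [measurable]: "b1 j \<in> borel_measurable borel" "b2 j \<in> borel_measurable borel" using b1 b2 j by auto
      show ?thesis unfolding b_def[abs_def] by measurable
    qed
    moreover have "integrable lborel (b j)" using b1 b2 j unfolding b_def[abs_def] by (intro Bochner_Integration.integrable_add) auto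
    ultimately show "(\<forall>s. 0 \<le> b j s) \<and> b j \<in> borel_measurable borel \<and> integrable lborel (b j)" by blast
  qed
  have bd: "\<forall>t. norm (f t + g t) \<le> (c1 + c2) * (\<Prod>j\<in>S. b j (t $ j))"
  proof
    fix t
    have p1: "(\<Prod>j\<in>S. b1 j (t $ j)) \<le> (\<Prod>j\<in>S. b j (t $ j))"
      using b1 b2 unfolding b_def by (intro prod_mono) auto
    have p2: "(\<Prod>j\<in>S. b2 j (t $ j)) \<le> (\<Prod>j\<in>S. b j (t $ j))"
      using b1 b2 unfolding b_def by (intro prod_mono) auto
    have "norm (f t + g t) \<le> norm (f t) + norm (g t)" by (rule norm_triangle_ineq)
    also have "\<dots> \<le> c1 * (\<Prod>j\<in>S. b j (t $ j)) + c2 * (\<Prod>j\<in>S. b j (t $ j))"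
      using f1 g1 p1 p2 c by (meson add_mono mult_left_mono order_trans)
    finally show "norm (f t + g t) \<le> (c1 + c2) * (\<Prod>j\<in>S. b j (t $ j))" by (simp add: algebra_simps)
  qed
  have "0 \<le> c1 + c2" using c by simp
  then show ?thesis unfolding bnd_def using m bp bd by blast
qed

lemma bnd_mult: assumes "bnd S f" "bnd T g" "S \<inter> T = {}" shows "bnd (S \<union> T) (\<lambda>t. f t * g t)"
proof -
  from assms obtain c1 b1 c2 b2 where fm: "f \<in> borel_measurable borel" and gm: "g \<in> borel_measurable borel"
    and c: "0 \<le> c1" "0 \<le> c2"
    and b1: "\<forall>j\<in>S. (\<forall>s. 0 \<le> b1 j s) \<and> b1 j \<in> borel_measurable borel \<and> integrable lborel (b1 j)"
    and b2: "\<forall>j\<in>T. (\<forall>s. 0 \<le> b2 j s) \<and> b2 j \<in> borel_measurable borel \<and> integrable lborel (b2 j)"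
    and f1: "\<forall>t. norm (f t) \<le> c1 * (\<Prod>j\<in>S. b1 j (t $ j))"
    and g1: "\<forall>t. norm (g t) \<le> c2 * (\<Prod>j\<in>T. b2 j (t $ j))"
    unfolding bnd_def by blast
  define b where "b j = (if j \<in> S then b1 j else b2 j)" for j
  have pS: "(\<Prod>j\<in>S. b j (t $ j)) = (\<Prod>j\<in>S. b1 j (t $ j))" for t unfolding b_def by simp
  have pT: "(\<Prod>j\<in>T. b j (t $ j)) = (\<Prod>j\<in>T. b2 j (t $ j))" for t
    unfolding b_def using assms(3) by (intro prod.cong) auto
  have m: "(\<lambda>t. f t * g t) \<in> borel_measurable borel" using fm gm by measurable
  have bp: "\<forall>j\<in>S \<union> T. (\<forall>s. 0 \<le> b j s) \<and> b j \<in> borel_measurable borel \<and> integrable lborel (b j)"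
    using b1 b2 unfolding b_def by auto
  have bd: "\<forall>t. norm (f t * g t) \<le> (c1 * c2) * (\<Prod>j\<in>S \<union> T. b j (t $ j))"
  proof
    fix t
    have n1: "0 \<le> (\<Prod>j\<in>S. b1 j (t $ j))" using b1 by (intro prod_nonneg) auto
    have "norm (f t * g t) = norm (f t) * norm (g t)" by (rule norm_mult)
    also have "\<dots> \<le> (c1 * (\<Prod>j\<in>S. b1 j (t $ j))) * (c2 * (\<Prod>j\<in>T. b2 j (t $ j)))"
      using f1 g1 c n1 by (intro mult_mono) auto
    also have "\<dots> = (c1 * c2) * (\<Prod>j\<in>S \<union> T. b j (t $ j))"
      using assms(3) by (simp add: prod.union_disjoint pS pT)
    finally show "norm (f t * g t) \<le> (c1 * c2) * (\<Prod>j\<in>S \<union> T. b j (t $ j))" .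
  qed
  have "0 \<le> c1 * c2" using c by simp
  then show ?thesis unfolding bnd_def using m bp bd by blast
qed

lemma bnd_one: "bnd {} (\<lambda>t. 1)"
  unfolding bnd_def by (intro conjI exI[of _ 1] exI[of _ "\<lambda>_ _. 0"]) auto

lemma bnd_sum_list: "(\<forall>p\<in>set cs. bnd S (F p)) \<Longrightarrow> bnd S (\<lambda>t. \<Sum>p\<leftarrow>cs. complex_of_real (fst p) * F p t)"
proof (induction cs)
  case Nil then show ?case by (simp add: bnd_zero)
next
  case (Cons p cs)
  then show ?case by (simp add: bnd_add bnd_scale)
qed

lemma bnd_prod_list:
  "(\<forall>N\<in>set cs. bnd (sc N) (phi N)) \<Longrightarrow>
   (\<forall>i<length cs. \<forall>k<length cs. i \<noteq> k \<longrightarrow> sc (cs ! i) \<inter> sc (cs ! k) = {}) \<Longrightarrow>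
   bnd (\<Union>N\<in>set cs. sc N) (\<lambda>t. \<Prod>N\<leftarrow>cs. phi N t)"
proof (induction cs)
  case Nil then show ?case by (simp add: bnd_one)
next
  case (Cons N cs)
  have d: "\<forall>i<length cs. \<forall>k<length cs. i \<noteq> k \<longrightarrow> sc (cs ! i) \<inter> sc (cs ! k) = {}"
  proof (intro allI impI)
    fix i k assume "i < length cs" "k < length cs" "i \<noteq> k"
    then show "sc (cs ! i) \<inter> sc (cs ! k) = {}" using Cons.prems(2)[rule_format, of "Suc i" "Suc k"] by simp
  qed
  have IH: "bnd (\<Union>N\<in>set cs. sc N) (\<lambda>t. \<Prod>N\<leftarrow>cs. phi N t)" using Cons d by simp
  have disj: "sc N \<inter> (\<Union>N\<in>set cs. sc N) = {}"
  proof -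
    have "sc N \<inter> sc M = {}" if "M \<in> set cs" for M
    proof -
      obtain k where k: "k < length cs" "M = cs ! k" using \<open>M \<in> set cs\<close> by (auto simp: in_set_conv_nth)
      then show ?thesis using Cons.prems(2)[rule_format, of 0 "Suc k"] by simp
    qed
    then show ?thesis by blast
  qed
  have "bnd (sc N \<union> (\<Union>N\<in>set cs. sc N)) (\<lambda>t. phi N t * (\<Prod>N\<leftarrow>cs. phi N t))"
    using bnd_mult[OF _ IH disj] Cons.prems(1) by simp
  then show ?case by simp
qed

lemma bnd_spn: "valid N \<Longrightarrow> (\<forall>(j, M)\<in>leaves N. (\<integral>\<^sup>+ t. ennreal (cmod (char M t)) \<partial>lborel) < \<infinity>) \<Longrightarrow> bnd (sc N) (phi N)"
proof (induction N rule: valid.induct)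
  case (1 j M)
  have M: "real_distribution M" using 1(1) by simp
  have cm[measurable]: "char M \<in> borel_measurable borel" using real_distribution.char_measurable[OF M] .
  have fin: "(\<integral>\<^sup>+ t. ennreal (cmod (char M t)) \<partial>lborel) < \<infinity>" using 1(2) by simp
  have ci: "integrable lborel (\<lambda>s. cmod (char M s))"
    using fin by (intro integrableI_bounded) auto
  have e: "phi (Leaf j M) = (\<lambda>t. char M (t $ j))" by (rule ext) simp
  have m: "phi (Leaf j M) \<in> borel_measurable borel" unfolding e by measurable
  have bp: "\<forall>j'\<in>sc (Leaf j M). (\<forall>s. 0 \<le> cmod (char M s)) \<and> (\<lambda>s. cmod (char M s)) \<in> borel_measurable borel
      \<and> integrable lborel (\<lambda>s. cmod (char M s))" using ci by simp
  have bd: "\<forall>t. norm (phi (Leaf j M) t) \<le> 1 * (\<Prod>j'\<in>sc (Leaf j M). cmod (char M (t $ j')))" by simp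
  show ?case unfolding bnd_def
    using m bp bd by (intro conjI exI[of _ 1] exI[of _ "\<lambda>_ s. cmod (char M s)"]) auto
next
  case (2 cs)
  have V1: "\<forall>p\<in>set cs. 0 \<le> fst p \<and> valid (snd p)"
    and V3: "\<forall>p\<in>set cs. \<forall>q\<in>set cs. sc (snd p) = sc (snd q)"
    using 2(2) unfolding valid.simps by blast+
  have all: "\<forall>p\<in>set cs. bnd (sc (SumN cs)) (phi (snd p))"
  proof
    fix p assume p: "p \<in> set cs"
    have v: "valid (snd p)" using V1 p by blast
    have sub: "leaves (snd p) \<subseteq> leaves (SumN cs)" using p by auto
    have l: "\<forall>(j, M)\<in>leaves (snd p). (\<integral>\<^sup>+ t. ennreal (cmod (char M t)) \<partial>lborel) < \<infinity>"
    proof (rule ballI)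
      fix x assume "x \<in> leaves (snd p)"
      with sub have "x \<in> leaves (SumN cs)" by (rule subsetD)
      then show "case x of (j, M) \<Rightarrow> (\<integral>\<^sup>+ t. ennreal (cmod (char M t)) \<partial>lborel) < \<infinity>" by (rule bspec[OF 2(3)])
    qed
    have b: "bnd (sc (snd p)) (phi (snd p))" using 2(1)[OF p v l] .
    have eqs: "\<forall>q\<in>set cs. sc (snd q) = sc (snd p)" using V3 p by blast
    have "sc (SumN cs) = (\<Union>q\<in>set cs. sc (snd q))" by simp
    also have "\<dots> = (\<Union>q\<in>set cs. sc (snd p))" by (rule SUP_cong[OF refl]) (use eqs in blast)
    also have "\<dots> = sc (snd p)" using p by auto
    finally have "sc (snd p) = sc (SumN cs)" by simp
    then show "bnd (sc (SumN cs)) (phi (snd p))" using b by simp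
  qed
  have "bnd (sc (SumN cs)) (\<lambda>t. \<Sum>p\<leftarrow>cs. complex_of_real (fst p) * phi (snd p) t)"
    by (rule bnd_sum_list[OF all])
  moreover have "(\<lambda>t. \<Sum>p\<leftarrow>cs. complex_of_real (fst p) * phi (snd p) t) = phi (SumN cs)"
    by (rule ext) simp
  ultimately show ?case by simp
next
  case (3 cs)
  have all: "\<forall>N\<in>set cs. bnd (sc N) (phi N)"
  proof
    fix N assume N: "N \<in> set cs"
    have v: "valid N" using 3(2) N unfolding valid.simps by blast
    have sub: "leaves N \<subseteq> leaves (ProdN cs)" using N by auto
    have l: "\<forall>(j, M)\<in>leaves N. (\<integral>\<^sup>+ t. ennreal (cmod (char M t)) \<partial>lborel) < \<infinity>"
    proof (rule ballI)
      fix x assume "x \<in> leaves N"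
      with sub have "x \<in> leaves (ProdN cs)" by (rule subsetD)
      then show "case x of (j, M) \<Rightarrow> (\<integral>\<^sup>+ t. ennreal (cmod (char M t)) \<partial>lborel) < \<infinity>" by (rule bspec[OF 3(3)])
    qed
    show "bnd (sc N) (phi N)" using 3(1)[OF N v l] .
  qed
  have d: "\<forall>i<length cs. \<forall>k<length cs. i \<noteq> k \<longrightarrow> sc (cs ! i) \<inter> sc (cs ! k) = {}"
    using 3(2) unfolding valid.simps by blast
  have "bnd (\<Union>N\<in>set cs. sc N) (\<lambda>t. \<Prod>N\<leftarrow>cs. phi N t)"
    by (rule bnd_prod_list[OF all d])
  moreover have "(\<lambda>t. \<Prod>N\<leftarrow>cs. phi N t) = phi (ProdN cs)"
    by (rule ext) simp
  ultimately show ?case by simp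
qed


lemma Basis_cart_real: "(Basis :: (real ^ 'n::finite) set) = range (\<lambda>j. axis j 1)"
  unfolding Basis_vec_def by auto

lemma integrable_spn:
  fixes C :: "'n::finite chispn"
  assumes "bnd UNIV (phi C)"
  shows "integrable lborel (phi C)"
proof -
  from assms obtain c b where pm: "phi C \<in> borel_measurable borel" and c: "0 \<le> c"
    and b: "\<forall>j\<in>UNIV. (\<forall>s. 0 \<le> b j s) \<and> b j \<in> borel_measurable borel \<and> integrable lborel (b j)"
    and bd: "\<forall>t. norm (phi C t) \<le> c * (\<Prod>j\<in>UNIV. b j (t $ j))"
    unfolding bnd_def by blast
  define idx where "idx e = (SOME j. e = axis j (1::real))" for e :: "real ^ 'n"
  have idx: "idx (axis j 1) = j" for j
    unfolding idx_def by (rule some_equality) (auto simp: axis_eq_axis)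
  define f where "f e = b (idx e)" for e
  have inj: "inj (\<lambda>j::'n. axis j (1::real))" by (auto simp: inj_def axis_eq_axis)
  have pe: "(\<Prod>e\<in>Basis. f e (t \<bullet> e)) = (\<Prod>j\<in>UNIV. b j (t $ j))" for t :: "real ^ 'n"
    unfolding Basis_cart_real by (subst prod.reindex[OF inj]) (simp add: f_def idx inner_axis)
  have fi: "integrable lborel (f e)" if "e \<in> Basis" for e
    using b unfolding f_def by auto
  have wi: "integrable lborel (\<lambda>t::real ^ 'n. c * (\<Prod>j\<in>UNIV. b j (t $ j)))"
    using lborel_prod_integral(1)[of f, OF fi] unfolding pe by (rule integrable_mult_right)
  have pm': "phi C \<in> borel_measurable lborel" using pm by simp
  show ?thesis
  proof (rule Bochner_Integration.integrable_bound[OF wi pm'])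
    show "AE t in lborel. norm (phi C t) \<le> norm (c * (\<Prod>j\<in>UNIV. b j (t $ j)))"
      using bd by (intro AE_I2) (auto intro: order_trans)
  qed
qed

theorem lemma1:
  fixes C :: "'n::finite chispn"
    and P :: "'w measure"
    and X :: "'w \<Rightarrow> real ^ 'n"
  assumes "valid C"
    and "sc C = UNIV"
    and "prob_space P"
    and "X \<in> measurable P borel"
    and "\<And>t. (CLINT \<omega>|P. exp (\<i> * complex_of_real (t \<bullet> X \<omega>))) = phi C t"
    and "\<And>j M. (j, M) \<in> leaves C \<Longrightarrow>
           (\<integral>\<^sup>+ t. ennreal (cmod (char M t)) \<partial>lborel) < \<infinity>"
  shows "\<exists>f :: real ^ 'n \<Rightarrow> real.
           continuous_on UNIV f \<and> (\<forall>x. 0 \<le> f x) \<and>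
           distributed P lborel X (\<lambda>x. ennreal (f x)) \<and>
           (\<forall>x. complex_of_real (f x) =
                 (1 / (2 * pi) ^ CARD('n)) *
                 (CLINT t|lborel. exp (- (\<i> * complex_of_real (t \<bullet> x))) * phi C t))"
proof -
  have "bnd (sc C) (phi C)"
    using assms(1,6) by (intro bnd_spn) auto
  then have int: "integrable lborel (phi C)"
    using assms(2) by (intro integrable_spn) simp
  have eq: "\<And>t. phi C t = (CLINT \<omega>|P. exp (\<i> * complex_of_real (t \<bullet> X \<omega>)))"
    using assms(5) by simp
  have D: "DIM(real ^ 'n) = CARD('n)" by simp
  show ?thesis
    using inversion_generic[OF assms(3) assms(4) eq int, unfolded D] .
qed


end
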